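(* Let $\mathcal{H}=(V,H,\bm{w})$ be a finite, connected, weighted undirected hypergraph in which every hyperedge has at least two vertices. Then for any two distinct vertices $u,v\in V$ and any hyperedge $h\in H$, the functions $\alpha\mapsto\kappa_\alpha(u,v)$ and $\alpha\mapsto\kappa_\alpha(h)$ are concave on $[0,1]$.
   Context: A weighted undirected hypergraph $\mathcal{H}=(V,H,\bm{w})$ has a finite vertex set $V$, a finite set $H$ of hyperedges (subsets of $V$), and positive weights $w_h>0$ for $h\in H$. Distinct vertices $u,v$ are adjacent ($u\sim v$) if some hyperedge contains both; $\Gamma(x)=\{z\in V: z\sim x\}$. The degree is $\mathrm{Deg}(x)=\sum_{h\ni x}w_h$. A hyperpath connecting $u$ and $v$ is a sequence of hyperedges $h_1,\dots,h_l$ with $u\in h_1$, $v\in h_l$, $h_j\cap h_{j+1}\neq\emptyset$ for $1\le j\le l-1$; $\mathcal{H}$ is connected if every two distinct vertices are connected by a hyperpath. For $u\neq v$, $d(u,v)=\inf_\gamma\sum_{h\in\gamma}w_h$ over hyperpaths $\gamma$ connecting $u,v$, and $d(u,u)=0$. For a hyperedge $h=\{x_1,\dots,x_k\}$, $L(h)=\min_{1\le i<j\le k}d(x_i,x_j)$. For probability measures $\mu,\nu$ on $V$, $W(\mu,\nu)=\inf_\pi\sum_{x,y\in V}\pi(x,y)d(x,y)$, the infimum over couplings $\pi$ of $\mu,\nu$ (probability measures on $V\times V$ with marginals $\mu$ and $\nu$). For $\alpha\in[0,1]$ and $x\in V$, the measure $\mu_x^\alpha$ is: $\mu_x^\alpha(x)=\alpha$;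 $\mu_x^\alpha(z)=(1-\alpha)\sum_{h'\in H:\,x,z\in h'}\frac{1}{|h'|-1}\frac{w_{h'}}{\mathrm{Deg}(x)}$ for $z\in\Gamma(x)$; and $0$ otherwise. For distinct $u,v$, $\kappa_\alpha(u,v)=1-\frac{W(\mu_u^\alpha,\mu_v^\alpha)}{d(u,v)}$. For $h=\{x_1,\dots,x_k\}$, $W_\alpha(h)=\sum_{1\le i<j\le k}W(\mu_{x_i}^\alpha,\mu_{x_j}^\alpha)$ and $\kappa_\alpha(h)=1-\frac{W_\alpha(h)}{L(h)}$. *)

theory Defs
  imports "HOL-Analysis.Analysis"
begin

definition adjacent :: "'a set set \<Rightarrow> 'a \<Rightarrow> 'a \<Rightarrow> bool" where
  "adjacent H u v \<longleftrightarrow> u \<noteq> v \<and> (\<exists>h\<in>H. u \<in> h \<and> v \<in> h)"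

definition nbhd :: "'a set \<Rightarrow> 'a set set \<Rightarrow> 'a \<Rightarrow> 'a set" where
  "nbhd V H x = {z \<in> V. adjacent H z x}"

definition Deg :: "'a set set \<Rightarrow> ('a set \<Rightarrow> real) \<Rightarrow> 'a \<Rightarrow> real" where
  "Deg H w x = (\<Sum>h\<in>{h\<in>H. x \<in> h}. w h)"

definition hyperpath :: "'a set set \<Rightarrow> 'a \<Rightarrow> 'a \<Rightarrow> 'a set list \<Rightarrow> bool" where
  "hyperpath H u v p \<longleftrightarrow> p \<noteq> [] \<and> set p \<subseteq> H \<and> u \<in> hd p \<and> v \<in> last p \<and>
     (\<forall>j. Suc j < length p \<longrightarrow> p ! j \<inter> p ! Suc j \<noteq> {})"

definition hg_connected :: "'a set \<Rightarrow> 'a set set \<Rightarrow> bool" where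
  "hg_connected V H \<longleftrightarrow> (\<forall>u\<in>V. \<forall>v\<in>V. u \<noteq> v \<longrightarrow> (\<exists>p. hyperpath H u v p))"

definition hdist :: "'a set set \<Rightarrow> ('a set \<Rightarrow> real) \<Rightarrow> 'a \<Rightarrow> 'a \<Rightarrow> real" where
  "hdist H w u v = (if u = v then 0
     else Inf {sum_list (map w p) | p. hyperpath H u v p})"

definition Lh :: "'a set set \<Rightarrow> ('a set \<Rightarrow> real) \<Rightarrow> 'a set \<Rightarrow> real" where
  "Lh H w h = Min {hdist H w x y | x y. x \<in> h \<and> y \<in> h \<and> x \<noteq> y}"

definition coupling :: "'a set \<Rightarrow> ('a \<Rightarrow> real) \<Rightarrow> ('a \<Rightarrow> real) \<Rightarrow> ('a \<Rightarrow> 'a \<Rightarrow> real) \<Rightarrow> bool" where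
  "coupling V \<mu> \<nu> \<pi> \<longleftrightarrow> (\<forall>x\<in>V. \<forall>y\<in>V. \<pi> x y \<ge> 0)
     \<and> (\<forall>x\<in>V. (\<Sum>y\<in>V. \<pi> x y) = \<mu> x) \<and> (\<forall>y\<in>V. (\<Sum>x\<in>V. \<pi> x y) = \<nu> y)"

definition Wass :: "'a set \<Rightarrow> 'a set set \<Rightarrow> ('a set \<Rightarrow> real) \<Rightarrow> ('a \<Rightarrow> real) \<Rightarrow> ('a \<Rightarrow> real) \<Rightarrow> real" where
  "Wass V H w \<mu> \<nu> = Inf {(\<Sum>x\<in>V. \<Sum>y\<in>V. \<pi> x y * hdist H w x y) | \<pi>. coupling V \<mu> \<nu> \<pi>}"

definition mu :: "'a set \<Rightarrow> 'a set set \<Rightarrow> ('a set \<Rightarrow> real) \<Rightarrow> real \<Rightarrow> 'a \<Rightarrow> 'a \<Rightarrow> real" where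
  "mu V H w \<alpha> x z = (if z = x then \<alpha>
     else if z \<in> nbhd V H x then
       (1 - \<alpha>) * (\<Sum>h'\<in>{h'\<in>H. x \<in> h' \<and> z \<in> h'}. (1 / (real (card h') - 1)) * (w h' / Deg H w x))
     else 0)"

definition kappa_vert :: "'a set \<Rightarrow> 'a set set \<Rightarrow> ('a set \<Rightarrow> real) \<Rightarrow> real \<Rightarrow> 'a \<Rightarrow> 'a \<Rightarrow> real" where
  "kappa_vert V H w \<alpha> u v = 1 - Wass V H w (mu V H w \<alpha> u) (mu V H w \<alpha> v) / hdist H w u v"

text \<open>The sum over 1 \<le> i < j \<le> k is taken w.r.t. an enumeration of h increasing
in the linear order on vertices; this covers each unordered pair exactly once.\<close>
definition W_edge :: "'a::linorder set \<Rightarrow> 'a set set \<Rightarrow> ('a set \<Rightarrow> real) \<Rightarrow> real \<Rightarrow> 'a set \<Rightarrow> real" where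
  "W_edge V H w \<alpha> h = (\<Sum>(x, y)\<in>{(x, y). x \<in> h \<and> y \<in> h \<and> x < y}.
      Wass V H w (mu V H w \<alpha> x) (mu V H w \<alpha> y))"

definition kappa_edge :: "'a::linorder set \<Rightarrow> 'a set set \<Rightarrow> ('a set \<Rightarrow> real) \<Rightarrow> real \<Rightarrow> 'a set \<Rightarrow> real" where
  "kappa_edge V H w \<alpha> h = 1 - W_edge V H w \<alpha> h / Lh H w h"

end

theory Submission imports Defs begin
lemma mu_affine:
  assumes "s + t = 1"
  shows "mu V H w (s*a + t*b) x z = s * mu V H w a x z + t * mu V H w b x z"
proof -
  have t: "t = 1 - s" using assms by simp
  show ?thesis unfolding mu_def t by (simp add: algebra_simps)
qed


lemma Wass_convex:
  assumes fin: "finite V" and d0: "\<And>x y. x \<in> V \<Longrightarrow> y \<in> V \<Longrightarrow> hdist H w x y \<ge> 0"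
    and c1: "coupling V \<mu>1 \<nu>1 p1" and c2: "coupling V \<mu>2 \<nu>2 p2"
    and s: "s \<ge> 0" and t: "t \<ge> 0" and st: "s + t = 1"
  shows "Wass V H w (\<lambda>z. s*\<mu>1 z + t*\<mu>2 z) (\<lambda>z. s*\<nu>1 z + t*\<nu>2 z)
         \<le> s * Wass V H w \<mu>1 \<nu>1 + t * Wass V H w \<mu>2 \<nu>2"
proof -
  let ?S = "\<lambda>\<mu> \<nu>. {(\<Sum>x\<in>V. \<Sum>y\<in>V. \<pi> x y * hdist H w x y) | \<pi>. coupling V \<mu> \<nu> \<pi>}"
  have bdd: "bdd_below (?S \<mu> \<nu>)" for \<mu> \<nu>
  proof (rule bdd_belowI[of _ 0])
    fix c assume "c \<in> ?S \<mu> \<nu>"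
    then obtain \<pi> where "coupling V \<mu> \<nu> \<pi>" and c: "c = (\<Sum>x\<in>V. \<Sum>y\<in>V. \<pi> x y * hdist H w x y)" by blast
    then have "\<forall>x\<in>V. \<forall>y\<in>V. \<pi> x y \<ge> 0" unfolding coupling_def by blast
    then show "0 \<le> c" unfolding c by (intro sum_nonneg) (simp add: d0)
  qed
  have ne1: "?S \<mu>1 \<nu>1 \<noteq> {}" using c1 by blast
  have ne2: "?S \<mu>2 \<nu>2 \<noteq> {}" using c2 by blast
  show ?thesis
  proof (rule field_le_epsilon)
    fix e :: real assume e: "e > 0"
    have "Inf (?S \<mu>1 \<nu>1) < Wass V H w \<mu>1 \<nu>1 + e" unfolding Wass_def using e by simp
    from cInf_lessD[OF ne1 this] obtain q1 where q1: "coupling V \<mu>1 \<nu>1 q1"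
      and q1c: "(\<Sum>x\<in>V. \<Sum>y\<in>V. q1 x y * hdist H w x y) < Wass V H w \<mu>1 \<nu>1 + e" by blast
    have "Inf (?S \<mu>2 \<nu>2) < Wass V H w \<mu>2 \<nu>2 + e" unfolding Wass_def using e by simp
    from cInf_lessD[OF ne2 this] obtain q2 where q2: "coupling V \<mu>2 \<nu>2 q2"
      and q2c: "(\<Sum>x\<in>V. \<Sum>y\<in>V. q2 x y * hdist H w x y) < Wass V H w \<mu>2 \<nu>2 + e" by blast
    define q where "q = (\<lambda>x y. s * q1 x y + t * q2 x y)"
    have cq: "coupling V (\<lambda>z. s*\<mu>1 z + t*\<mu>2 z) (\<lambda>z. s*\<nu>1 z + t*\<nu>2 z) q"
      using q1 q2 s t unfolding coupling_def q_def
      by (simp add: sum.distrib sum_distrib_left[symmetric])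
    have "Wass V H w (\<lambda>z. s*\<mu>1 z + t*\<mu>2 z) (\<lambda>z. s*\<nu>1 z + t*\<nu>2 z)
        \<le> (\<Sum>x\<in>V. \<Sum>y\<in>V. q x y * hdist H w x y)"
      unfolding Wass_def by (rule cInf_lower[OF _ bdd]) (use cq in blast)
    also have "\<dots> = s * (\<Sum>x\<in>V. \<Sum>y\<in>V. q1 x y * hdist H w x y) + t * (\<Sum>x\<in>V. \<Sum>y\<in>V. q2 x y * hdist H w x y)"
      unfolding q_def by (simp add: sum.distrib sum_distrib_left algebra_simps)
    also have "\<dots> \<le> s * (Wass V H w \<mu>1 \<nu>1 + e) + t * (Wass V H w \<mu>2 \<nu>2 + e)"
      using q1c q2c s t by (intro add_mono mult_left_mono) auto
    also have "\<dots> = s * Wass V H w \<mu>1 \<nu>1 + t * Wass V H w \<mu>2 \<nu>2 + e"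
    proof -
      have "s * (Wass V H w \<mu>1 \<nu>1 + e) + t * (Wass V H w \<mu>2 \<nu>2 + e) = s * Wass V H w \<mu>1 \<nu>1 + t * Wass V H w \<mu>2 \<nu>2 + (s+t)*e"
        by (simp add: algebra_simps)
      then show ?thesis using st by simp
    qed
    finally show "Wass V H w (\<lambda>z. s*\<mu>1 z + t*\<mu>2 z) (\<lambda>z. s*\<nu>1 z + t*\<nu>2 z)
         \<le> s * Wass V H w \<mu>1 \<nu>1 + t * Wass V H w \<mu>2 \<nu>2 + e" .
  qed
qed

lemma mu_prob:
  assumes finV: "finite V" and finH: "finite H" and sub: "\<forall>h\<in>H. h \<subseteq> V"
    and card2: "\<forall>h\<in>H. card h \<ge> 2" and wpos: "\<forall>h\<in>H. w h > 0"
    and xV: "x \<in> V" and h0: "h0 \<in> H" "x \<in> h0" and a0: "0 \<le> \<alpha>" and a1: "\<alpha> \<le> 1"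
  shows "(\<Sum>z\<in>V. mu V H w \<alpha> x z) = 1" and "mu V H w \<alpha> x z \<ge> 0"
proof -
  define Hx where "Hx = {h\<in>H. x \<in> h}"
  define D where "D = Deg H w x"
  define N where "N = nbhd V H x"
  define c where "c = (\<lambda>h. (1 / (real (card h) - 1)) * (w h / D))"
  have finHx: "finite Hx" using finH unfolding Hx_def by simp
  have D: "D = (\<Sum>h\<in>Hx. w h)" unfolding D_def Deg_def Hx_def ..
  have Dpos: "D > 0" unfolding D
  proof (rule sum_pos2[OF finHx, of h0])
    show "h0 \<in> Hx" using h0 unfolding Hx_def by simp
  qed (use wpos h0 in \<open>auto simp: Hx_def less_imp_le\<close>)
  have finN: "finite N" using finV unfolding N_def nbhd_def by simp
  have NV: "N \<subseteq> V - {x}" unfolding N_def nbhd_def adjacent_def by auto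
  have cpos: "c h \<ge> 0" if "h \<in> H" for h
  proof -
    have "real (card h) \<ge> 2" using card2 that by simp
    then show ?thesis unfolding c_def using wpos that Dpos by (simp add: less_imp_le)
  qed
  have mu_eq: "mu V H w \<alpha> x z = (if z = x then \<alpha> else if z \<in> N then (1-\<alpha>) * (\<Sum>h\<in>{h\<in>Hx. z \<in> h}. c h) else 0)" for z
    unfolding mu_def N_def c_def D_def Hx_def by (simp add: conj_assoc)
  show "mu V H w \<alpha> x z \<ge> 0"
    unfolding mu_eq using a0 a1 cpos
    by (auto intro!: mult_nonneg_nonneg sum_nonneg simp: Hx_def)
  have "(\<Sum>z\<in>V. mu V H w \<alpha> x z) = mu V H w \<alpha> x x + (\<Sum>z\<in>V - {x}. mu V H w \<alpha> x z)"
    using finV xV by (simp add: sum.remove)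
  also have "(\<Sum>z\<in>V - {x}. mu V H w \<alpha> x z) = (\<Sum>z\<in>V - {x}. if z \<in> N then (1-\<alpha>) * (\<Sum>h\<in>{h\<in>Hx. z \<in> h}. c h) else 0)"
    by (rule sum.cong) (auto simp: mu_eq)
  also have "\<dots> = (\<Sum>z\<in>N. (1-\<alpha>) * (\<Sum>h\<in>{h\<in>Hx. z \<in> h}. c h))"
    using NV finV by (subst sum.inter_filter[symmetric]) (auto intro!: sum.cong)
  also have "\<dots> = (1-\<alpha>) * (\<Sum>z\<in>N. \<Sum>h\<in>Hx. if z \<in> h then c h else 0)"
    using finHx by (simp add: sum_distrib_left sum.inter_filter)
  also have "(\<Sum>z\<in>N. \<Sum>h\<in>Hx. if z \<in> h then c h else 0) = (\<Sum>h\<in>Hx. \<Sum>z\<in>N. if z \<in> h then c h else 0)"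
    by (rule sum.swap)
  also have "\<dots> = (\<Sum>h\<in>Hx. c h * real (card h - 1))"
  proof (rule sum.cong[OF refl])
    fix h assume hx: "h \<in> Hx"
    have "{z\<in>N. z \<in> h} = h - {x}"
      using hx sub unfolding N_def nbhd_def adjacent_def Hx_def by auto
    moreover have "finite h" using hx sub finV unfolding Hx_def using finite_subset by blast
    ultimately show "(\<Sum>z\<in>N. if z \<in> h then c h else 0) = c h * real (card h - 1)"
      using hx finN unfolding Hx_def by (simp add: sum.inter_filter[symmetric])
  qed
  also have "\<dots> = (\<Sum>h\<in>Hx. w h / D)"
  proof (rule sum.cong[OF refl])
    fix h assume hx: "h \<in> Hx"
    have "card h \<ge> 2" using card2 hx unfolding Hx_def by simp
    then have "real (card h - 1) = real (card h) - 1" and "real (card h) - 1 \<noteq> 0" by auto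
    then show "c h * real (card h - 1) = w h / D" unfolding c_def by simp
  qed
  also have "\<dots> = 1" using Dpos by (simp add: sum_divide_distrib[symmetric] D)
  finally show "(\<Sum>z\<in>V. mu V H w \<alpha> x z) = 1" by (simp add: mu_def)
qed

lemma hdist_nonneg:
  assumes conn: "hg_connected V H" and wpos: "\<forall>h\<in>H. w h > 0" and "x \<in> V" "y \<in> V"
  shows "hdist H w x y \<ge> 0"
proof (cases "x = y")
  case True then show ?thesis by (simp add: hdist_def)
next
  case False
  then obtain p where p: "hyperpath H x y p" using conn assms unfolding hg_connected_def by blast
  have "Inf {sum_list (map w p) | p. hyperpath H x y p} \<ge> 0"
  proof (rule cInf_greatest)
    show "{sum_list (map w p) | p. hyperpath H x y p} \<noteq> {}" using p by blast
  next
    fix s assume "s \<in> {sum_list (map w p) | p. hyperpath H x y p}"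
    then obtain q where q: "hyperpath H x y q" and s: "s = sum_list (map w q)" by blast
    have "set q \<subseteq> H" using q unfolding hyperpath_def by blast
    then show "0 \<le> s" unfolding s using wpos by (intro sum_list_nonneg) (auto intro: less_imp_le)
  qed
  then show ?thesis using False by (simp add: hdist_def)
qed

lemma prod_coupling:
  assumes "finite V" "\<forall>x\<in>V. \<mu> x \<ge> 0" "\<forall>x\<in>V. \<nu> x \<ge> 0" "(\<Sum>x\<in>V. \<mu> x) = 1" "(\<Sum>x\<in>V. \<nu> x) = 1"
  shows "coupling V \<mu> \<nu> (\<lambda>x y. \<mu> x * \<nu> y)"
  using assms unfolding coupling_def by (simp add: sum_distrib_left[symmetric] sum_distrib_right[symmetric])

lemma Wass_mu_convex:
  assumes finV: "finite V" and finH: "finite H" and sub: "\<forall>h\<in>H. h \<subseteq> V"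
    and card2: "\<forall>h\<in>H. card h \<ge> 2" and wpos: "\<forall>h\<in>H. w h > 0"
    and conn: "hg_connected V H"
    and uV: "u \<in> V" and hu: "hu \<in> H" "u \<in> hu" and vV: "v \<in> V" and hv: "hv \<in> H" "v \<in> hv"
  shows "convex_on {0..1} (\<lambda>\<alpha>. Wass V H w (mu V H w \<alpha> u) (mu V H w \<alpha> v))"
proof (rule convex_onI)
  show "convex {0..1::real}" by simp
next
  fix t x y :: real assume t: "0 < t" "t < 1" and x: "x \<in> {0..1}" and y: "y \<in> {0..1}"
  have cpl: "coupling V (mu V H w a u) (mu V H w a v) (\<lambda>p q. mu V H w a u p * mu V H w a v q)"
    if "a \<in> {0..1}" for a
    using that by (intro prod_coupling finV ballI
      mu_prob[OF finV finH sub card2 wpos uV hu] mu_prob[OF finV finH sub card2 wpos vV hv]) auto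
  have e1: "mu V H w ((1 - t) *\<^sub>R x + t *\<^sub>R y) u = (\<lambda>z. (1-t) * mu V H w x u z + t * mu V H w y u z)"
    by (rule ext) (simp add: mu_affine)
  have e2: "mu V H w ((1 - t) *\<^sub>R x + t *\<^sub>R y) v = (\<lambda>z. (1-t) * mu V H w x v z + t * mu V H w y v z)"
    by (rule ext) (simp add: mu_affine)
  show "Wass V H w (mu V H w ((1 - t) *\<^sub>R x + t *\<^sub>R y) u) (mu V H w ((1 - t) *\<^sub>R x + t *\<^sub>R y) v)
        \<le> (1 - t) * Wass V H w (mu V H w x u) (mu V H w x v) + t * Wass V H w (mu V H w y u) (mu V H w y v)"
    unfolding e1 e2
    by (rule Wass_convex[OF finV _ cpl[OF x] cpl[OF y]]) (use t hdist_nonneg[OF conn wpos] in auto)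
qed

lemma conc_of_convex:
  assumes "convex_on {0..1} g" and "(c::real) \<ge> 0"
  shows "concave_on {0..1} (\<lambda>\<alpha>::real. 1 - g \<alpha> / c)"
  unfolding concave_on_def
proof (rule convex_onI)
  show "convex {0..1::real}" by simp
next
  fix t x y :: real assume t: "0 < t" "t < 1" and x: "x \<in> {0..1}" and y: "y \<in> {0..1}"
  have "g ((1 - t) *\<^sub>R x + t *\<^sub>R y) \<le> (1 - t) * g x + t * g y"
    using convex_onD[OF assms(1)] t x y by simp
  then have "g ((1 - t) *\<^sub>R x + t *\<^sub>R y) / c \<le> ((1 - t) * g x + t * g y) / c"
    using assms(2) by (rule divide_right_mono)
  moreover have "((1 - t) * g x + t * g y) / c = (1-t) * (g x / c) + t * (g y / c)"
    by (simp add: add_divide_distrib)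
  ultimately show "- (1 - g ((1 - t) *\<^sub>R x + t *\<^sub>R y) / c) \<le> (1 - t) * - (1 - g x / c) + t * - (1 - g y / c)"
    by (simp add: algebra_simps)
qed

lemma convex_on_finsum:
  assumes "finite I" "convex S" "\<And>i. i \<in> I \<Longrightarrow> convex_on S (f i)"
  shows "convex_on S (\<lambda>a. \<Sum>i\<in>I. f i a)"
  using assms(1,3)
proof (induction I rule: finite_induct)
  case empty then show ?case using assms(2) by (simp add: convex_on_const)
next
  case (insert i I) then show ?case by (simp add: convex_on_add)
qed

theorem mainTheorem1:
  fixes V :: "'a::linorder set" and H :: "'a set set" and w :: "'a set \<Rightarrow> real"
  assumes "finite V" and "finite H"
    and "\<forall>h\<in>H. h \<subseteq> V" and "\<forall>h\<in>H. card h \<ge> 2"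
    and "\<forall>h\<in>H. w h > 0"
    and "hg_connected V H"
  shows "(\<forall>u\<in>V. \<forall>v\<in>V. u \<noteq> v \<longrightarrow> concave_on {0..1} (\<lambda>\<alpha>. kappa_vert V H w \<alpha> u v))
       \<and> (\<forall>h\<in>H. concave_on {0..1} (\<lambda>\<alpha>. kappa_edge V H w \<alpha> h))"
proof (intro conjI ballI impI)
  fix u v assume uV: "u \<in> V" and vV: "v \<in> V" and uv: "u \<noteq> v"
  then obtain p where p: "hyperpath H u v p" using assms(6) unfolding hg_connected_def by blast
  then have hdH: "hd p \<in> H" "u \<in> hd p" "last p \<in> H" "v \<in> last p" unfolding hyperpath_def by auto
  have cv: "convex_on {0..1} (\<lambda>\<alpha>. Wass V H w (mu V H w \<alpha> u) (mu V H w \<alpha> v))"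
    by (rule Wass_mu_convex[OF assms uV hdH(1,2) vV hdH(3,4)])
  show "concave_on {0..1} (\<lambda>\<alpha>. kappa_vert V H w \<alpha> u v)"
    unfolding kappa_vert_def
    by (rule conc_of_convex[OF cv hdist_nonneg[OF assms(6) assms(5) uV vV]])
next
  fix h assume hH: "h \<in> H"
  have finh: "finite h" using hH assms(1,3) finite_subset by blast
  let ?P = "{(x, y). x \<in> h \<and> y \<in> h \<and> x < y}"
  have finP: "finite ?P" by (rule finite_subset[of _ "h \<times> h"]) (use finh in auto)
  have cv: "convex_on {0..1} (\<lambda>\<alpha>. W_edge V H w \<alpha> h)"
    unfolding W_edge_def
  proof (rule convex_on_finsum[OF finP])
    fix i assume "i \<in> ?P"
    then obtain x y where i: "i = (x, y)" "x \<in> h" "y \<in> h" by blast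
    have "x \<in> V" "y \<in> V" using i hH assms(3) by auto
    then show "convex_on {0..1} (\<lambda>\<alpha>. case i of (x, y) \<Rightarrow> Wass V H w (mu V H w \<alpha> x) (mu V H w \<alpha> y))"
      unfolding i(1) using Wass_mu_convex[OF assms _ hH i(2) _ hH i(3)] by simp
  qed simp
  let ?S = "{hdist H w x y | x y. x \<in> h \<and> y \<in> h \<and> x \<noteq> y}"
  have finS: "finite ?S"
    by (rule finite_subset[of _ "(\<lambda>(x,y). hdist H w x y) ` (h \<times> h)"]) (use finh in auto)
  have "\<not> card h \<le> Suc 0" using assms(4) hH by auto
  then obtain x y where "x \<in> h" "y \<in> h" "x \<noteq> y" using card_le_Suc0_iff_eq[OF finh] by blast
  then have neS: "?S \<noteq> {}" by blast
  have "Lh H w h \<in> ?S" unfolding Lh_def by (rule Min_in[OF finS neS])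
  then obtain a b where ab: "Lh H w h = hdist H w a b" "a \<in> h" "b \<in> h" by blast
  have "a \<in> V" "b \<in> V" using ab hH assms(3) by auto
  then have L0: "Lh H w h \<ge> 0" unfolding ab(1) by (rule hdist_nonneg[OF assms(6) assms(5)])
  show "concave_on {0..1} (\<lambda>\<alpha>. kappa_edge V H w \<alpha> h)"
    unfolding kappa_edge_def by (rule conc_of_convex[OF cv L0])
qed

end
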